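(* Let $m_1\le m_2\le\dots\le m_k$ be nonnegative integers, $n=\sum_r m_r$, and let $T_1,\dots,T_n\in\{H,L\}$ with $0\le H<L$. Let $q^{(t)}_r$ ($1\le r\le k$, $1\le t\le n+1$) be the capacity variables computed by Algorithm 1 on this input. Then for every $1\le t\le n$ and every $1\le r<s\le k$ we have $q^{(t)}_r\le q^{(t)}_s$.
   Context: Algorithm 1 (simulation-based threshold algorithm). Input: integers $0\le m_1\le\dots\le m_k$ and a sequence $T_1,\dots,T_n$ with $n=\sum_r m_r$. Set $q^{(1)}_r=m_r$ for all $r$. For $t=1,\dots,n$: set $x_t=\mathrm{TA}(q^{(t)}_1,\dots,q^{(t)}_k;\,T_t,T_{t+1},\dots,T_n)$ and $q^{(t+1)}_r=q^{(t)}_r-\mathbf{1}(x_t=r)$ for each $r$. Output $\mathbf{x}=(x_1,\dots,x_n)$. Subroutine $\mathrm{TA}(m_1,\dots,m_k;\,S_1,\dots,S_N)$ (ThresholdAllocation), with the convention $m_0:=0$: for $\gamma=k,k-1,\dots,1$: if $m_\gamma=m_{\gamma-1}$, go to the next $\gamma$; otherwise, for $h=\gamma,\gamma+1,\dots,k$: let $Z_L=\sum_{i=1}^{h-1}\min\{m_i,m_{\gamma-1}\}$ and $Z_H=\sum_{i=\gamma}^{h}(m_i-m_{\gamma-1})$; if $|\{i\in\{1,\dots,Z_L+Z_H\}: S_i>S_1\}|\ge Z_L$, return $\gamma$ (agent to which $S_1$ is assigned). *)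

theory Defs
  imports Complex_Main
begin

definition cap0 :: "(nat \<Rightarrow> int) \<Rightarrow> nat \<Rightarrow> int" where
  "cap0 m i = (if i = 0 then 0 else m i)"

definition TA_test :: "(nat \<Rightarrow> int) \<Rightarrow> (nat \<Rightarrow> real) \<Rightarrow> nat \<Rightarrow> nat \<Rightarrow> bool" where
  "TA_test m S \<gamma> h =
    (let ZL = (\<Sum>i\<in>{1..h-1}. min (cap0 m i) (cap0 m (\<gamma>-1)));
         ZH = (\<Sum>i\<in>{\<gamma>..h}. cap0 m i - cap0 m (\<gamma>-1))
     in int (card {i\<in>{1..nat (ZL + ZH)}. S i > S 1}) \<ge> ZL)"

definition TA_accepts :: "(nat \<Rightarrow> int) \<Rightarrow> nat \<Rightarrow> (nat \<Rightarrow> real) \<Rightarrow> nat \<Rightarrow> bool" where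
  "TA_accepts m k S \<gamma> = (cap0 m \<gamma> \<noteq> cap0 m (\<gamma>-1) \<and> (\<exists>h\<in>{\<gamma>..k}. TA_test m S \<gamma> h))"

text \<open>ThresholdAllocation: gamma runs downward from k, so the returned agent is the largest
  accepted gamma. If the loops end without returning (not specified in the paper) we return 0,
  which is not an agent, so no capacity changes.\<close>
definition TA :: "(nat \<Rightarrow> int) \<Rightarrow> nat \<Rightarrow> (nat \<Rightarrow> real) \<Rightarrow> nat" where
  "TA m k S = (if \<exists>\<gamma>\<in>{1..k}. TA_accepts m k S \<gamma>
               then Max {\<gamma>\<in>{1..k}. TA_accepts m k S \<gamma>} else 0)"

text \<open>alg_q m k T j = q^(j+1) of Algorithm 1; step j+1 uses S_i = T_(j+i).\<close>
fun alg_q :: "(nat \<Rightarrow> nat) \<Rightarrow> nat \<Rightarrow> (nat \<Rightarrow> real) \<Rightarrow> nat \<Rightarrow> nat \<Rightarrow> int" where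
  "alg_q m k T 0 = (\<lambda>r. int (m r))"
| "alg_q m k T (Suc j) =
     (let q = alg_q m k T j; x = TA q k (\<lambda>i. T (j + i))
      in (\<lambda>r. q r - (if x = r then 1 else 0)))"

definition capvar :: "(nat \<Rightarrow> nat) \<Rightarrow> nat \<Rightarrow> (nat \<Rightarrow> real) \<Rightarrow> nat \<Rightarrow> nat \<Rightarrow> int" where
  "capvar m k T t r = alg_q m k T (t - 1) r"

end

theory Submission
  imports Defs
begin

lemma TA_prop:
  assumes "TA q k S = x" "x \<noteq> 0"
  shows "x \<in> {1..k} \<and> TA_accepts q k S x"
proof -
  have ex: "\<exists>\<gamma>\<in>{1..k}. TA_accepts q k S \<gamma>" using assms unfolding TA_def by (auto split: if_splits)
  hence "x = Max {\<gamma>\<in>{1..k}. TA_accepts q k S \<gamma>}" using assms unfolding TA_def by auto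
  moreover have "Max {\<gamma>\<in>{1..k}. TA_accepts q k S \<gamma>} \<in> {\<gamma>\<in>{1..k}. TA_accepts q k S \<gamma>}"
    using ex by (intro Max_in) auto
  ultimately show ?thesis by auto
qed

lemma step_sorted:
  assumes so: "\<And>r s. 1 \<le> r \<Longrightarrow> r \<le> s \<Longrightarrow> s \<le> k \<Longrightarrow> q r \<le> (q s :: int)"
    and x: "TA q k S = x"
    and rs: "1 \<le> r" "r \<le> s" "s \<le> k"
  shows "q r - (if x = r then 1 else 0) \<le> q s - (if x = s then 1 else 0)"
proof (cases "x = s \<and> x \<noteq> r")
  case True
  hence x0: "x \<noteq> 0" using rs by auto
  from TA_prop[OF x x0] have acc: "TA_accepts q k S x" by auto
  hence ne: "cap0 q x \<noteq> cap0 q (x-1)" unfolding TA_accepts_def by auto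
  have "r < s" using True rs by auto
  hence "s \<ge> 2" using rs by auto
  hence "q (s-1) \<noteq> q s" using ne True unfolding cap0_def by auto
  moreover have "q (s-1) \<le> q s" using so[of "s-1" s] rs \<open>s\<ge>2\<close> by auto
  moreover have "q r \<le> q (s-1)" using so[of r "s-1"] rs \<open>r<s\<close> by auto
  ultimately show ?thesis using True by auto
next
  case False
  thus ?thesis using so[OF rs] by auto
qed

lemma alg_sorted:
  assumes sorted: "\<And>r s. 1 \<le> r \<Longrightarrow> r \<le> s \<Longrightarrow> s \<le> k \<Longrightarrow> m r \<le> m s"
  shows "1 \<le> r \<Longrightarrow> r \<le> s \<Longrightarrow> s \<le> k \<Longrightarrow> alg_q m k T j r \<le> alg_q m k T j s"
proof (induction j arbitrary: r s)
  case 0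
  thus ?case using sorted by simp
next
  case (Suc j)
  show ?case
    using step_sorted[of k "alg_q m k T j" "\<lambda>i. T (j + i)", OF Suc.IH refl Suc.prems]
    by (simp add: Let_def)
qed

theorem lemma3:
  fixes m :: "nat \<Rightarrow> nat" and k n :: nat and T :: "nat \<Rightarrow> real" and H L :: real
  assumes sorted: "\<And>r s. 1 \<le> r \<Longrightarrow> r \<le> s \<Longrightarrow> s \<le> k \<Longrightarrow> m r \<le> m s"
    and n_def: "n = (\<Sum>r\<in>{1..k}. m r)"
    and HL: "0 \<le> H" "H < L"
    and T_vals: "\<And>t. 1 \<le> t \<Longrightarrow> t \<le> n \<Longrightarrow> T t = H \<or> T t = L"
    and t: "1 \<le> t" "t \<le> n"
    and rs: "1 \<le> r" "r < s" "s \<le> k"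
  shows "capvar m k T t r \<le> capvar m k T t s"
  unfolding capvar_def using alg_sorted[OF sorted] rs by simp

end
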